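(* Every tropical halo has tempered growth.
   Context: A halo is a commutative unital semiring with a partial order compatible with its operations ($x\le z,y\le t\Rightarrow xy\le zt,\ x+y\le z+t$). It is tropical if it is not $\{0\}$, its order is total, and $a+b=\max(a,b)$. A halo $R$ has tempered growth if for every non-zero $P\in\mathbb{N}[X]$ and every $x\in R$, ($x^n\le P(n)$ in $R$ for all $n\in\mathbb{N}$) implies $x\le1$; here a natural number $m$ is interpreted in $R$ as $1+\dots+1$. *)

theory Defs
  imports "HOL-Computational_Algebra.Polynomial"
begin

definition halo :: "'a::{comm_semiring_1,order} itself \<Rightarrow> bool" where
  "halo _ \<longleftrightarrow>
     (\<forall>x y z t :: 'a. x \<le> z \<longrightarrow> y \<le> t \<longrightarrow> x * y \<le> z * t \<and> x + y \<le> z + t)"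

definition tropical_halo :: "'a::{comm_semiring_1,order} itself \<Rightarrow> bool" where
  "tropical_halo T \<longleftrightarrow> halo T \<and>
     (UNIV :: 'a set) \<noteq> {0} \<and>
     (\<forall>x y :: 'a. x \<le> y \<or> y \<le> x) \<and>
     (\<forall>a b :: 'a. a + b = max a b)"

definition tempered_growth :: "'a::{comm_semiring_1,order} itself \<Rightarrow> bool" where
  "tempered_growth _ \<longleftrightarrow>
     (\<forall>(P :: nat poly) (x :: 'a). P \<noteq> 0 \<longrightarrow>
        (\<forall>n. x ^ n \<le> of_nat (poly P n)) \<longrightarrow> x \<le> 1)"

end

theory Submission
  imports Defs
begin

theorem lemma1p28:
  assumes "tropical_halo TYPE('a::{comm_semiring_1,order})"
  shows "tempered_growth TYPE('a)"
proof -
  have mx: "\<And>a b :: 'a. a + b = max a b" and ne: "(UNIV :: 'a set) \<noteq> {0}"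
    using assms unfolding tropical_halo_def by auto
  have z1: "(0::'a) \<le> 1"
  proof (rule ccontr)
    assume "\<not> (0::'a) \<le> 1"
    then have "(0::'a) + 1 = 0" using mx[of 0 1] by (simp add: max_def)
    then have "(1::'a) = 0" by simp
    then have "\<And>y::'a. y = 0" by (metis mult_1 mult_zero_left)
    then show False using ne by auto
  qed
  have le1: "of_nat k \<le> (1::'a)" for k
  proof (induction k)
    case 0 then show ?case using z1 by simp
  next
    case (Suc k)
    have "of_nat (Suc k) = max (1::'a) (of_nat k)" using mx[of 1 "of_nat k"] by simp
    then show ?case using Suc by (simp add: max_def)
  qed
  show ?thesis unfolding tempered_growth_def
  proof (intro allI impI)
    fix P :: "nat poly" and x :: 'a
    assume "\<forall>n. x ^ n \<le> of_nat (poly P n)"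
    then have "x \<le> of_nat (poly P 1)" by (metis power_one_right)
    then show "x \<le> 1" using le1 order_trans by blast
  qed
qed

end
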